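(* Let $\Phi$ be a finite crystallographic root system and let $\Psi\subset\Phi^+$ be an antichain in the root poset. Then (i) $\langle\beta,\gamma\rangle\le 0$ for all $\beta\ne\gamma$ in $\Psi$; (ii) there are at most $|\Psi|-1$ (unordered) pairs $\{\beta,\gamma\}$ of distinct roots in $\Psi$ for which $\mathcal{X}_\beta$ and $\mathcal{X}_\gamma$ are dependent; (iii) the graph on the vertex set $\Psi$ with an edge between $\beta\ne\gamma$ whenever $\mathcal{X}_\beta$ and $\mathcal{X}_\gamma$ are dependent has maximal vertex degree at most $3$.
   Context: $\Phi\subset V$ is a finite crystallographic root system (inner product $\langle\cdot,\cdot\rangle$) with simple roots $\Delta$, positive roots $\Phi^+$ and Weyl group $W$. The root poset is the partial order on $\Phi^+$ generated by $\beta\prec\gamma$ whenever $\gamma-\beta\in\Delta$; an antichain is a set of pairwise incomparable elements. For $\beta\in\Phi^+$, $\mathcal{X}_\beta$ is the Bernoulli random variable on $W$ (uniform) with $\mathcal{X}_\beta(w)=1$ if $w(\beta)\in-\Phi^+$ and $0$ otherwise. *)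

theory Defs
  imports "HOL-Analysis.Analysis" "HOL-Probability.Probability"
begin

definition refl :: "'a::euclidean_space \<Rightarrow> 'a \<Rightarrow> 'a" where
  "refl \<alpha> v = v - (2 * (v \<bullet> \<alpha>) / (\<alpha> \<bullet> \<alpha>)) *\<^sub>R \<alpha>"

definition root_system :: "'a::euclidean_space set \<Rightarrow> bool" where
  "root_system \<Phi> \<longleftrightarrow> finite \<Phi> \<and> 0 \<notin> \<Phi> \<and> span \<Phi> = UNIV
     \<and> (\<forall>\<alpha>\<in>\<Phi>. refl \<alpha> ` \<Phi> = \<Phi>)
     \<and> (\<forall>\<alpha>\<in>\<Phi>. \<forall>c::real. c *\<^sub>R \<alpha> \<in> \<Phi> \<longrightarrow> c = 1 \<or> c = -1)
     \<and> (\<forall>\<alpha>\<in>\<Phi>. \<forall>\<beta>\<in>\<Phi>. 2 * (\<beta> \<bullet> \<alpha>) / (\<alpha> \<bullet> \<alpha>) \<in> \<int>)"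

definition nonneg_comb :: "'a::euclidean_space set \<Rightarrow> 'a \<Rightarrow> bool" where
  "nonneg_comb \<Delta> v \<longleftrightarrow> (\<exists>c. (\<forall>\<delta>\<in>\<Delta>. c \<delta> \<ge> (0::real)) \<and> v = (\<Sum>\<delta>\<in>\<Delta>. c \<delta> *\<^sub>R \<delta>))"

definition simple_system :: "'a::euclidean_space set \<Rightarrow> 'a set \<Rightarrow> bool" where
  "simple_system \<Phi> \<Delta> \<longleftrightarrow> \<Delta> \<subseteq> \<Phi> \<and> independent \<Delta>
     \<and> (\<forall>\<alpha>\<in>\<Phi>. nonneg_comb \<Delta> \<alpha> \<or> nonneg_comb \<Delta> (- \<alpha>))"

definition pos_roots :: "'a::euclidean_space set \<Rightarrow> 'a set \<Rightarrow> 'a set" where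
  "pos_roots \<Phi> \<Delta> = {\<alpha>\<in>\<Phi>. nonneg_comb \<Delta> \<alpha>}"

inductive_set weyl_group :: "'a::euclidean_space set \<Rightarrow> ('a \<Rightarrow> 'a) set" for \<Phi> where
  weyl_id: "id \<in> weyl_group \<Phi>"
| weyl_step: "w \<in> weyl_group \<Phi> \<Longrightarrow> \<alpha> \<in> \<Phi> \<Longrightarrow> refl \<alpha> \<circ> w \<in> weyl_group \<Phi>"

definition root_le :: "'a::euclidean_space set \<Rightarrow> 'a set \<Rightarrow> 'a \<Rightarrow> 'a \<Rightarrow> bool" where
  "root_le \<Phi> \<Delta> \<beta> \<gamma> \<longleftrightarrow>
     (\<beta>, \<gamma>) \<in> {(x, y). x \<in> pos_roots \<Phi> \<Delta> \<and> y \<in> pos_roots \<Phi> \<Delta> \<and> y - x \<in> \<Delta>}\<^sup>*"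

definition antichain :: "'a::euclidean_space set \<Rightarrow> 'a set \<Rightarrow> 'a set \<Rightarrow> bool" where
  "antichain \<Phi> \<Delta> \<Psi> \<longleftrightarrow> \<Psi> \<subseteq> pos_roots \<Phi> \<Delta>
     \<and> (\<forall>\<beta>\<in>\<Psi>. \<forall>\<gamma>\<in>\<Psi>. \<beta> \<noteq> \<gamma> \<longrightarrow> \<not> root_le \<Phi> \<Delta> \<beta> \<gamma>)"

definition Xvar :: "'a::euclidean_space set \<Rightarrow> 'a set \<Rightarrow> 'a \<Rightarrow> ('a \<Rightarrow> 'a) \<Rightarrow> real" where
  "Xvar \<Phi> \<Delta> \<beta> w = (if w \<beta> \<in> uminus ` pos_roots \<Phi> \<Delta> then 1 else 0)"

definition dependent_pair :: "'a::euclidean_space set \<Rightarrow> 'a set \<Rightarrow> 'a \<Rightarrow> 'a \<Rightarrow> bool" where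
  "dependent_pair \<Phi> \<Delta> \<beta> \<gamma> \<longleftrightarrow>
     \<not> prob_space.indep_var (measure_pmf (pmf_of_set (weyl_group \<Phi>)))
         borel (Xvar \<Phi> \<Delta> \<beta>) borel (Xvar \<Phi> \<Delta> \<gamma>)"

end

theory Submission
  imports Defs
begin


lemma sum_FG_bool:
  fixes X Y :: "'w \<Rightarrow> real" and F G :: "real \<Rightarrow> real"
  assumes fin: "finite W"
    and f: "bij_betw f W W" and g: "bij_betw g W W"
    and X01: "\<And>w. w \<in> W \<Longrightarrow> X w = 0 \<or> X w = 1"
    and Y01: "\<And>w. w \<in> W \<Longrightarrow> Y w = 0 \<or> Y w = 1"
    and Xf: "\<And>w. w \<in> W \<Longrightarrow> X (f w) = 1 - X w"
    and Yf: "\<And>w. w \<in> W \<Longrightarrow> Y (f w) = Y w"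
    and Yg: "\<And>w. w \<in> W \<Longrightarrow> Y (g w) = 1 - Y w"
  shows "(\<Sum>w\<in>W. F (X w) * G (Y w)) = (F 0 + F 1) * (G 0 + G 1) * card W / 4"
proof -
  define n where "n = real (card W)"
  have sX: "(\<Sum>w\<in>W. X w) = n / 2"
  proof -
    have "(\<Sum>w\<in>W. X w) = (\<Sum>w\<in>W. X (f w))"
      using sum.reindex_bij_betw[OF f, of X] by simp
    also have "\<dots> = (\<Sum>w\<in>W. 1 - X w)" using Xf by (intro sum.cong) auto
    also have "\<dots> = n - (\<Sum>w\<in>W. X w)" by (simp add: sum_subtractf n_def)
    finally show ?thesis by simp
  qed
  have sY: "(\<Sum>w\<in>W. Y w) = n / 2"
  proof -
    have "(\<Sum>w\<in>W. Y w) = (\<Sum>w\<in>W. Y (g w))"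
      using sum.reindex_bij_betw[OF g, of Y] by simp
    also have "\<dots> = (\<Sum>w\<in>W. 1 - Y w)" using Yg by (intro sum.cong) auto
    also have "\<dots> = n - (\<Sum>w\<in>W. Y w)" by (simp add: sum_subtractf n_def)
    finally show ?thesis by simp
  qed
  have sXY: "(\<Sum>w\<in>W. X w * Y w) = n / 4"
  proof -
    have "(\<Sum>w\<in>W. X w * Y w) = (\<Sum>w\<in>W. X (f w) * Y (f w))"
      using sum.reindex_bij_betw[OF f, of "\<lambda>w. X w * Y w"] by simp
    also have "\<dots> = (\<Sum>w\<in>W. Y w - X w * Y w)"
    proof (intro sum.cong refl)
      fix w assume "w \<in> W"
      then show "X (f w) * Y (f w) = Y w - X w * Y w" unfolding Xf[OF \<open>w \<in> W\<close>] Yf[OF \<open>w \<in> W\<close>] by (simp add: algebra_simps)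
    qed
    also have "\<dots> = n/2 - (\<Sum>w\<in>W. X w * Y w)" by (simp add: sum_subtractf sY)
    finally show ?thesis by simp
  qed
  have "(\<Sum>w\<in>W. F (X w) * G (Y w)) = (\<Sum>w\<in>W. (F 0 + (F 1 - F 0) * X w) * (G 0 + (G 1 - G 0) * Y w))"
  proof (intro sum.cong refl)
    fix w assume w: "w \<in> W"
    from X01[OF w] Y01[OF w] show "F (X w) * G (Y w) = (F 0 + (F 1 - F 0) * X w) * (G 0 + (G 1 - G 0) * Y w)"
      by (elim disjE) simp_all
  qed
  also have "\<dots> = (\<Sum>w\<in>W. F 0 * G 0 + F 0 * (G 1 - G 0) * Y w + (F 1 - F 0) * G 0 * X w
       + (F 1 - F 0) * (G 1 - G 0) * (X w * Y w))"
    by (intro sum.cong) (auto simp: algebra_simps)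
  also have "\<dots> = F 0 * G 0 * n + F 0 * (G 1 - G 0) * (n/2) + (F 1 - F 0) * G 0 * (n/2)
       + (F 1 - F 0) * (G 1 - G 0) * (n/4)"
    by (simp add: sum.distrib sum_distrib_left[symmetric] sX sY sXY n_def)
  also have "\<dots> = (F 0 + F 1) * (G 0 + G 1) * n / 4" by (simp add: algebra_simps)
  finally show ?thesis by (simp add: n_def)
qed

lemma (in prob_space) indep_var_from_sets:
  fixes X Y :: "_ \<Rightarrow> real"
  assumes rv: "random_variable borel X" "random_variable borel Y"
    and key: "\<And>A B. prob (X -` A \<inter> space M \<inter> (Y -` B \<inter> space M)) = prob (X -` A \<inter> space M) * prob (Y -` B \<inter> space M)"
  shows "indep_var borel X borel Y"
proof -
  have "indep_set {X -` A \<inter> space M |A. A \<in> sets borel} {Y -` A \<inter> space M |A. A \<in> sets borel}"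
    unfolding indep_sets2_eq using key rv by (auto dest: measurable_sets)
  then show ?thesis
    unfolding indep_var_def indep_vars_def2 indep_set_def using rv
    by (subst (asm) indep_sets_cong[where G="\<lambda>i. {(case i of True \<Rightarrow> X | False \<Rightarrow> Y) -` A \<inter> space M |A.
        A \<in> sets (case i of True \<Rightarrow> borel | False \<Rightarrow> borel)}"]) (auto split: bool.split)
qed

lemma indep_var_pmf_of_set:
  fixes X Y :: "'w \<Rightarrow> real"
  assumes fin: "finite W" and ne: "W \<noteq> {}"
    and f: "bij_betw f W W" and g: "bij_betw g W W"
    and X01: "\<And>w. w \<in> W \<Longrightarrow> X w = 0 \<or> X w = 1"
    and Y01: "\<And>w. w \<in> W \<Longrightarrow> Y w = 0 \<or> Y w = 1"
    and Xf: "\<And>w. w \<in> W \<Longrightarrow> X (f w) = 1 - X w"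
    and Yf: "\<And>w. w \<in> W \<Longrightarrow> Y (f w) = Y w"
    and Yg: "\<And>w. w \<in> W \<Longrightarrow> Y (g w) = 1 - Y w"
  shows "prob_space.indep_var (measure_pmf (pmf_of_set W)) borel X borel Y"
proof -
  let ?M = "measure_pmf (pmf_of_set W)"
  have key: "measure ?M (X -` A \<inter> Y -` B) = measure ?M (X -` A) * measure ?M (Y -` B)" for A B
  proof -
    have c: "real (card (W \<inter> S)) = (\<Sum>w\<in>W. indicator S w)" for S
    proof -
      have "(\<Sum>w\<in>W \<inter> S. 1::real) = (\<Sum>w\<in>W. indicator S w)"
        by (subst sum.inter_restrict[OF fin]) (auto intro!: sum.cong simp: indicator_def)
      then show ?thesis by simp
    qed
    have e1: "(\<Sum>w\<in>W. indicator (X -` A \<inter> Y -` B) w :: real) = (\<Sum>w\<in>W. indicator A (X w) * (indicator B (Y w) :: real))"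
      by (intro sum.cong) (auto simp: indicator_def)
    have e2: "(\<Sum>w\<in>W. indicator (X -` A) w :: real) = (\<Sum>w\<in>W. indicator A (X w) * (\<lambda>_. 1::real) (Y w))"
      by (intro sum.cong) (auto simp: indicator_def)
    have e3: "(\<Sum>w\<in>W. indicator (Y -` B) w :: real) = (\<Sum>w\<in>W. (\<lambda>_. 1::real) (X w) * indicator B (Y w))"
      by (intro sum.cong) (auto simp: indicator_def)
    have cW: "card W > 0" using fin ne by auto
    note L = sum_FG_bool[of W f g X Y, OF fin f g X01 Y01 Xf Yf Yg]
    note s1 = L[of "indicator A" "indicator B"]
    note s2 = L[of "indicator A" "\<lambda>_. 1"]
    note s3 = L[of "\<lambda>_. 1" "indicator B"]
    show ?thesis
    proof -
      have t1: "(\<Sum>w\<in>W. indicator A (X w) * (indicator B (Y w) :: real)) = (indicator A 0 + indicator A 1 :: real) * (indicator B 0 + indicator B 1 :: real) * card W / 4"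
        using s1 by simp
      have t2: "(\<Sum>w\<in>W. indicator A (X w) :: real) = (indicator A 0 + indicator A 1 :: real) * card W / 2"
        using s2 by (simp add: algebra_simps)
      have t3: "(\<Sum>w\<in>W. indicator B (Y w) :: real) = (indicator B 0 + indicator B 1 :: real) * card W / 2"
        using s3 by (simp add: algebra_simps)
      show ?thesis
        unfolding measure_pmf_of_set[OF ne fin] c e1 e2 e3
        using cW by (simp add: t1 t2 t3 field_simps)
    qed
  qed
  show ?thesis
    by (rule measure_pmf.indep_var_from_sets) (use key in auto)
qed



locale rsys =
  fixes \<Phi> \<Delta> :: "'a::euclidean_space set"
  assumes RS: "root_system \<Phi>" and SS: "simple_system \<Phi> \<Delta>"
begin

abbreviation P where "P \<equiv> pos_roots \<Phi> \<Delta>"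

lemma finPhi: "finite \<Phi>" and zeroPhi: "0 \<notin> \<Phi>" and spanPhi: "span \<Phi> = UNIV"
  and reflPhi: "\<alpha> \<in> \<Phi> \<Longrightarrow> refl \<alpha> ` \<Phi> = \<Phi>"
  and reduced: "\<alpha> \<in> \<Phi> \<Longrightarrow> c *\<^sub>R \<alpha> \<in> \<Phi> \<Longrightarrow> c = 1 \<or> c = -1"
  and cartan: "\<alpha> \<in> \<Phi> \<Longrightarrow> \<beta> \<in> \<Phi> \<Longrightarrow> 2 * (\<beta> \<bullet> \<alpha>) / (\<alpha> \<bullet> \<alpha>) \<in> \<int>"
  using RS unfolding root_system_def by auto

lemma DsubPhi: "\<Delta> \<subseteq> \<Phi>" and indepD: "independent \<Delta>"
  and signs: "\<alpha> \<in> \<Phi> \<Longrightarrow> nonneg_comb \<Delta> \<alpha> \<or> nonneg_comb \<Delta> (- \<alpha>)"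
  using SS unfolding simple_system_def by auto

lemma finD: "finite \<Delta>" using DsubPhi finPhi finite_subset by auto

lemma nz: "\<alpha> \<in> \<Phi> \<Longrightarrow> \<alpha> \<noteq> 0" using zeroPhi by auto

lemma inner_pos: "\<alpha> \<in> \<Phi> \<Longrightarrow> \<alpha> \<bullet> \<alpha> > 0" using nz by auto

lemma refl_in: "\<alpha> \<in> \<Phi> \<Longrightarrow> \<beta> \<in> \<Phi> \<Longrightarrow> refl \<alpha> \<beta> \<in> \<Phi>"
  using reflPhi by blast

lemma refl_self: "\<alpha> \<noteq> 0 \<Longrightarrow> refl \<alpha> \<alpha> = - \<alpha>"
  by (simp add: refl_def algebra_simps scaleR_2)

lemma neg_in: "\<alpha> \<in> \<Phi> \<Longrightarrow> - \<alpha> \<in> \<Phi>"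
  using refl_in[of \<alpha> \<alpha>] refl_self[OF nz] by metis

lemma refl_refl: "\<alpha> \<noteq> 0 \<Longrightarrow> refl \<alpha> (refl \<alpha> v) = v"
  by (simp add: refl_def inner_diff_left algebra_simps)

lemma refl_orth: "v \<bullet> \<alpha> = 0 \<Longrightarrow> refl \<alpha> v = v"
  by (simp add: refl_def)

lemma linear_refl: "linear (refl \<alpha>)"
  by (rule linearI) (simp_all add: refl_def inner_add_left algebra_simps add_divide_distrib scaleR_add_left)

lemma spanD: "span \<Delta> = UNIV"
proof -
  have "\<Phi> \<subseteq> span \<Delta>"
  proof
    fix \<alpha> assume a: "\<alpha> \<in> \<Phi>"
    have nc: "nonneg_comb \<Delta> v \<Longrightarrow> v \<in> span \<Delta>" for v
      unfolding nonneg_comb_def by (auto intro!: span_sum span_scale intro: span_base)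
    from signs[OF a] show "\<alpha> \<in> span \<Delta>"
      using nc span_neg by fastforce
  qed
  then have "span \<Phi> \<subseteq> span \<Delta>" by (simp add: span_minimal)
  then show ?thesis using spanPhi by auto
qed

definition crd :: "'a \<Rightarrow> 'a \<Rightarrow> real" where
  "crd \<delta> = (SOME g. linear g \<and> (\<forall>x\<in>\<Delta>. g x = (if x = \<delta> then 1 else 0)))"

lemma crd_ex: "linear (crd \<delta>) \<and> (\<forall>x\<in>\<Delta>. crd \<delta> x = (if x = \<delta> then 1 else 0))"
proof -
  have "\<exists>g. linear g \<and> (\<forall>x\<in>\<Delta>. g x = (if x = \<delta> then 1 else 0))"
    by (rule linear_independent_extend[OF indepD])
  from someI_ex[OF this] show ?thesis unfolding crd_def .
qed

lemma linear_crd: "linear (crd \<delta>)" using crd_ex by blast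

lemma crd_basis: "x \<in> \<Delta> \<Longrightarrow> crd \<delta> x = (if x = \<delta> then 1 else 0)"
  using crd_ex by blast

lemma crd_add: "crd \<delta> (x + y) = crd \<delta> x + crd \<delta> y"
  using linear_crd by (simp add: linear_add)
lemma crd_diff: "crd \<delta> (x - y) = crd \<delta> x - crd \<delta> y"
  using linear_crd by (simp add: linear_diff)
lemma crd_neg: "crd \<delta> (- x) = - crd \<delta> x"
  using linear_crd by (simp add: linear_neg)
lemma crd_scale: "crd \<delta> (c *\<^sub>R x) = c * crd \<delta> x"
  using linear_crd by (simp add: linear_scale)
lemma crd_zero: "crd \<delta> 0 = 0"
  using linear_crd by (simp add: linear_0)

lemma crd_sum_basis: "\<delta> \<in> \<Delta> \<Longrightarrow> crd \<delta> (\<Sum>d\<in>\<Delta>. c d *\<^sub>R d) = c \<delta>"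
proof -
  assume d: "\<delta> \<in> \<Delta>"
  have "crd \<delta> (\<Sum>d\<in>\<Delta>. c d *\<^sub>R d) = (\<Sum>d\<in>\<Delta>. c d * crd \<delta> d)"
    using linear_crd by (simp add: linear_sum linear_scale)
  also have "\<dots> = (\<Sum>d\<in>\<Delta>. if d = \<delta> then c d else 0)"
    by (intro sum.cong) (auto simp: crd_basis)
  also have "\<dots> = c \<delta>" using d finD by simp
  finally show ?thesis .
qed

lemma expand: "v = (\<Sum>d\<in>\<Delta>. crd d v *\<^sub>R d)"
proof -
  have "v \<in> span \<Delta>" using spanD by auto
  then obtain u where u: "v = (\<Sum>d\<in>\<Delta>. u d *\<^sub>R d)"
    using span_finite[OF finD] by auto
  have "crd d v = u d" if "d \<in> \<Delta>" for d
    using crd_sum_basis[OF that, of u] u by simp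
  then have "(\<Sum>d\<in>\<Delta>. crd d v *\<^sub>R d) = (\<Sum>d\<in>\<Delta>. u d *\<^sub>R d)"
    by (intro sum.cong refl) simp
  then show ?thesis using u by simp
qed

lemma eq_by_crd:
  assumes "\<And>d. d \<in> \<Delta> \<Longrightarrow> crd d u = crd d v" shows "u = v"
proof -
  have "(\<Sum>d\<in>\<Delta>. crd d u *\<^sub>R d) = (\<Sum>d\<in>\<Delta>. crd d v *\<^sub>R d)"
    by (intro sum.cong refl) (simp add: assms)
  then show ?thesis using expand[of u] expand[of v] by metis
qed

lemma nonneg_comb_iff: "nonneg_comb \<Delta> v \<longleftrightarrow> (\<forall>d\<in>\<Delta>. crd d v \<ge> 0)"
proof
  assume "nonneg_comb \<Delta> v"
  then obtain c where c: "\<forall>d\<in>\<Delta>. c d \<ge> 0" "v = (\<Sum>d\<in>\<Delta>. c d *\<^sub>R d)"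
    unfolding nonneg_comb_def by auto
  show "\<forall>d\<in>\<Delta>. crd d v \<ge> 0"
  proof
    fix d assume "d \<in> \<Delta>"
    then have "crd d v = c d" unfolding c(2) by (rule crd_sum_basis)
    then show "crd d v \<ge> 0" using c(1) \<open>d \<in> \<Delta>\<close> by simp
  qed
next
  assume a: "\<forall>d\<in>\<Delta>. crd d v \<ge> 0"
  show "nonneg_comb \<Delta> v" unfolding nonneg_comb_def
    by (rule exI[of _ "\<lambda>d. crd d v"], rule conjI, fact a, rule expand)
qed

lemma P_iff: "\<alpha> \<in> P \<longleftrightarrow> \<alpha> \<in> \<Phi> \<and> (\<forall>d\<in>\<Delta>. crd d \<alpha> \<ge> 0)"
  unfolding pos_roots_def nonneg_comb_iff by auto

lemma PsubPhi: "P \<subseteq> \<Phi>" using P_iff by auto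

lemma sign: "\<alpha> \<in> \<Phi> \<Longrightarrow> \<alpha> \<in> P \<or> - \<alpha> \<in> P"
  using signs[of \<alpha>] neg_in[of \<alpha>] unfolding pos_roots_def by auto

definition ht :: "'a \<Rightarrow> real" where "ht v = (\<Sum>d\<in>\<Delta>. crd d v)"

lemma ht_add: "ht (x + y) = ht x + ht y" by (simp add: ht_def crd_add sum.distrib)
lemma ht_diff: "ht (x - y) = ht x - ht y" by (simp add: ht_def crd_diff sum_subtractf)
lemma ht_neg: "ht (- x) = - ht x" by (simp add: ht_def crd_neg sum_negf)
lemma ht_zero: "ht 0 = 0" by (simp add: ht_def crd_zero)
lemma ht_basis: "d \<in> \<Delta> \<Longrightarrow> ht d = 1"
proof -
  assume d: "d \<in> \<Delta>"
  have "ht d = (\<Sum>x\<in>\<Delta>. if x = d then 1 else 0)"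
    unfolding ht_def by (intro sum.cong refl) (use d in \<open>auto simp: crd_basis\<close>)
  also have "\<dots> = 1" using d finD by simp
  finally show ?thesis .
qed
lemma linear_ht: "linear ht"
  unfolding ht_def[abs_def] by (rule linear_compose_sum) (auto simp: linear_crd)

lemma ht_nonneg: "\<forall>d\<in>\<Delta>. crd d v \<ge> 0 \<Longrightarrow> ht v \<ge> 0"
  unfolding ht_def by (rule sum_nonneg) auto

lemma ht_pos: "\<alpha> \<in> P \<Longrightarrow> ht \<alpha> > 0"
proof -
  assume a: "\<alpha> \<in> P"
  then have nn: "\<forall>d\<in>\<Delta>. crd d \<alpha> \<ge> 0" and "\<alpha> \<noteq> 0" using P_iff nz by auto
  have "ht \<alpha> \<noteq> 0"
  proof
    assume "ht \<alpha> = 0"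
    then have "(\<Sum>d\<in>\<Delta>. crd d \<alpha>) = 0" by (simp add: ht_def)
    then have "\<forall>d\<in>\<Delta>. crd d \<alpha> = 0" by (subst (asm) sum_nonneg_eq_0_iff[OF finD]) (use nn in auto)
    then have "\<alpha> = 0" by (intro eq_by_crd) (simp add: crd_zero)
    with \<open>\<alpha> \<noteq> 0\<close> show False by simp
  qed
  with ht_nonneg[OF nn] show ?thesis by simp
qed

lemma not_both: "\<alpha> \<in> P \<Longrightarrow> - \<alpha> \<notin> P"
proof
  assume "\<alpha> \<in> P" "- \<alpha> \<in> P"
  then have "ht \<alpha> > 0" "ht (- \<alpha>) > 0" using ht_pos by blast+
  then show False unfolding ht_neg by simp
qed

lemma DsubP: "d \<in> \<Delta> \<Longrightarrow> d \<in> P"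
  unfolding P_iff using DsubPhi by (auto simp: crd_basis)


lemma strict_cs:
  assumes a: "\<alpha> \<in> \<Phi>" and b: "\<beta> \<in> \<Phi>" and ne1: "\<beta> \<noteq> \<alpha>" and ne2: "\<beta> \<noteq> - \<alpha>"
  shows "(\<alpha> \<bullet> \<beta>)^2 < (\<alpha> \<bullet> \<alpha>) * (\<beta> \<bullet> \<beta>)"
proof -
  have le: "(\<alpha> \<bullet> \<beta>)^2 \<le> (\<alpha> \<bullet> \<alpha>) * (\<beta> \<bullet> \<beta>)" using Cauchy_Schwarz_ineq by blast
  have na: "norm \<alpha> > 0" using nz[OF a] by simp
  have nb: "norm \<beta> > 0" using nz[OF b] by simp
  show ?thesis
  proof (rule ccontr)
    assume "\<not> ?thesis"
    with le have eq: "(\<alpha> \<bullet> \<beta>)^2 = (norm \<alpha> * norm \<beta>)^2"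
      by (simp add: power_mult_distrib power2_norm_eq_inner)
    have "\<bar>\<alpha> \<bullet> \<beta>\<bar> = norm \<alpha> * norm \<beta>"
      using eq by (metis abs_of_nonneg norm_ge_zero power2_eq_iff_nonneg abs_ge_zero power2_abs zero_le_mult_iff)
    then have "norm \<alpha> *\<^sub>R \<beta> = norm \<beta> *\<^sub>R \<alpha> \<or> norm \<alpha> *\<^sub>R \<beta> = - norm \<beta> *\<^sub>R \<alpha>"
      using norm_cauchy_schwarz_abs_eq by blast
    moreover define c where "c = norm \<beta> / norm \<alpha>"
    moreover have cpos: "c > 0" using na nb c_def by simp
    ultimately have "\<beta> = c *\<^sub>R \<alpha> \<or> \<beta> = (- c) *\<^sub>R \<alpha>"
      using na by (auto simp: c_def field_simps dest: arg_cong[where f="\<lambda>v. (1 / norm \<alpha>) *\<^sub>R v"])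
    then show False
    proof
      assume h: "\<beta> = c *\<^sub>R \<alpha>"
      then have "c = 1 \<or> c = -1" using reduced[OF a] b by simp
      then have "c = 1" using cpos by auto
      then show False using h ne1 by simp
    next
      assume h: "\<beta> = (- c) *\<^sub>R \<alpha>"
      then have "- c = 1 \<or> - c = -1" using reduced[OF a, of "- c"] b by simp
      then have "c = 1" using cpos by auto
      then show False using h ne2 by simp
    qed
  qed
qed

lemma cartan_int:
  assumes "\<alpha> \<in> \<Phi>" "\<beta> \<in> \<Phi>"
  obtains k :: int where "2 * (\<beta> \<bullet> \<alpha>) / (\<alpha> \<bullet> \<alpha>) = of_int k"
  using cartan[OF assms] by (metis Ints_cases)

lemma ab_prod:
  assumes "\<alpha> \<in> \<Phi>" "\<beta> \<in> \<Phi>"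
  shows "(2 * (\<alpha> \<bullet> \<beta>) / (\<beta> \<bullet> \<beta>)) * (2 * (\<beta> \<bullet> \<alpha>) / (\<alpha> \<bullet> \<alpha>))
     = 4 * (\<alpha> \<bullet> \<beta>)^2 / ((\<alpha> \<bullet> \<alpha>) * (\<beta> \<bullet> \<beta>))"
  using inner_pos[OF assms(1)] inner_pos[OF assms(2)]
  by (simp add: field_simps power2_eq_square inner_commute)

lemma root_diff:
  assumes a: "\<alpha> \<in> \<Phi>" and b: "\<beta> \<in> \<Phi>" and pos: "\<alpha> \<bullet> \<beta> > 0" and ne: "\<alpha> \<noteq> \<beta>"
  shows "\<alpha> - \<beta> \<in> \<Phi>"
proof -
  have ne2: "\<beta> \<noteq> - \<alpha>"
  proof
    assume "\<beta> = - \<alpha>"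
    then have "\<alpha> \<bullet> \<beta> = - (\<alpha> \<bullet> \<alpha>)" by simp
    with pos inner_pos[OF a] show False by simp
  qed
  have cs: "(\<alpha> \<bullet> \<beta>)^2 < (\<alpha> \<bullet> \<alpha>) * (\<beta> \<bullet> \<beta>)" using strict_cs[OF a b ne[symmetric] ne2] .
  obtain ka :: int where ka: "2 * (\<alpha> \<bullet> \<beta>) / (\<beta> \<bullet> \<beta>) = of_int ka" using cartan_int[OF b a] .
  obtain kb :: int where kb: "2 * (\<beta> \<bullet> \<alpha>) / (\<alpha> \<bullet> \<alpha>) = of_int kb" using cartan_int[OF a b] .
  have pa: "\<alpha> \<bullet> \<alpha> > 0" "\<beta> \<bullet> \<beta> > 0" using inner_pos a b by auto
  have "of_int ka > (0::real)" using ka[symmetric] pos pa by simp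
  then have ka1: "ka \<ge> 1" by simp
  have "of_int kb > (0::real)" using kb[symmetric] pos pa by (simp add: inner_commute)
  then have kb1: "kb \<ge> 1" by simp
  have "4 * (\<alpha> \<bullet> \<beta>)^2 / ((\<alpha> \<bullet> \<alpha>) * (\<beta> \<bullet> \<beta>)) < 4"
    using cs pa by (simp add: divide_less_eq)
  then have "of_int (ka * kb) < (4::real)" using ab_prod[OF a b] ka kb by simp
  then have "ka * kb < 4" by linarith
  then have "ka = 1 \<or> kb = 1"
  proof -
    assume h: "ka * kb < 4"
    show ?thesis
    proof (rule ccontr)
      assume "\<not> ?thesis"
      then have "ka \<ge> 2" "kb \<ge> 2" using ka1 kb1 by auto
      then have "ka * kb \<ge> 2 * 2" by (intro mult_mono) auto
      with h show False by simp
    qed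
  qed
  then show ?thesis
  proof
    assume "ka = 1"
    have "refl \<beta> \<alpha> = \<alpha> - (2 * (\<alpha> \<bullet> \<beta>) / (\<beta> \<bullet> \<beta>)) *\<^sub>R \<beta>" by (simp add: refl_def)
    also have "\<dots> = \<alpha> - of_int ka *\<^sub>R \<beta>" unfolding ka ..
    finally have "refl \<beta> \<alpha> = \<alpha> - \<beta>" using \<open>ka = 1\<close> by simp
    then show ?thesis using refl_in[OF b a] by simp
  next
    assume "kb = 1"
    have "refl \<alpha> \<beta> = \<beta> - (2 * (\<beta> \<bullet> \<alpha>) / (\<alpha> \<bullet> \<alpha>)) *\<^sub>R \<alpha>" by (simp add: refl_def)
    also have "\<dots> = \<beta> - of_int kb *\<^sub>R \<alpha>" unfolding kb ..
    finally have "refl \<alpha> \<beta> = \<beta> - \<alpha>" using \<open>kb = 1\<close> by simp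
    then have "\<beta> - \<alpha> \<in> \<Phi>" using refl_in[OF a b] by simp
    from neg_in[OF this] show ?thesis by simp
  qed
qed

lemma obtuse_bound:
  assumes a: "\<alpha> \<in> \<Phi>" and b: "\<beta> \<in> \<Phi>" and neg: "\<alpha> \<bullet> \<beta> < 0"
  shows "(\<alpha> \<bullet> \<alpha>) * (\<beta> \<bullet> \<beta>) \<le> 4 * (\<alpha> \<bullet> \<beta>)^2"
proof -
  obtain ka :: int where ka: "2 * (\<alpha> \<bullet> \<beta>) / (\<beta> \<bullet> \<beta>) = of_int ka" using cartan_int[OF b a] .
  obtain kb :: int where kb: "2 * (\<beta> \<bullet> \<alpha>) / (\<alpha> \<bullet> \<alpha>) = of_int kb" using cartan_int[OF a b] .
  have pa: "\<alpha> \<bullet> \<alpha> > 0" "\<beta> \<bullet> \<beta> > 0" using inner_pos a b by auto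
  have "of_int ka < (0::real)" using ka[symmetric] neg pa by (simp add: divide_neg_pos)
  then have ka1: "ka \<le> -1" by simp
  have "of_int kb < (0::real)" using kb[symmetric] neg pa by (simp add: inner_commute divide_neg_pos)
  then have kb1: "kb \<le> -1" by simp
  have "ka * kb \<ge> 1"
  proof -
    have "(-ka) * (-kb) \<ge> 1 * 1" by (intro mult_mono) (use ka1 kb1 in auto)
    then show ?thesis by simp
  qed
  then have "of_int (ka * kb) \<ge> (1::real)" by linarith
  then have "4 * (\<alpha> \<bullet> \<beta>)^2 / ((\<alpha> \<bullet> \<alpha>) * (\<beta> \<bullet> \<beta>)) \<ge> 1"
    using ab_prod[OF a b] ka kb by simp
  then show ?thesis using pa by (simp add: le_divide_eq)
qed

lemma inner_expand: "v \<bullet> w = (\<Sum>d\<in>\<Delta>. crd d v * (d \<bullet> w))"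
proof -
  have "v \<bullet> w = (\<Sum>d\<in>\<Delta>. crd d v *\<^sub>R d) \<bullet> w" by (subst expand[of v]) (rule refl)
  also have "\<dots> = (\<Sum>d\<in>\<Delta>. crd d v * (d \<bullet> w))" by (simp add: inner_sum_left)
  finally show ?thesis .
qed

lemma exists_pos_term:
  assumes "v \<bullet> v > 0"
  shows "\<exists>d\<in>\<Delta>. crd d v * (d \<bullet> v) > 0"
proof (rule ccontr)
  assume "\<not> ?thesis"
  then have "(\<Sum>d\<in>\<Delta>. crd d v * (d \<bullet> v)) \<le> 0" by (intro sum_nonpos) auto
  with assms inner_expand[of v v] show False by simp
qed

lemma crd_scale_basis: "d \<in> \<Delta> \<Longrightarrow> crd d' (c *\<^sub>R d) = (if d = d' then c else 0)"
  by (simp add: crd_scale crd_basis)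

lemma descent:
  assumes b: "\<beta> \<in> P" and nD: "\<beta> \<notin> \<Delta>"
  shows "\<exists>d\<in>\<Delta>. \<beta> - d \<in> P"
proof -
  have bPhi: "\<beta> \<in> \<Phi>" using b PsubPhi by auto
  have nn: "\<forall>d\<in>\<Delta>. crd d \<beta> \<ge> 0" using b P_iff by blast
  obtain d where d: "d \<in> \<Delta>" and t: "crd d \<beta> * (d \<bullet> \<beta>) > 0"
    using exists_pos_term[OF inner_pos[OF bPhi]] by blast
  have cpos: "crd d \<beta> > 0" and ipos: "\<beta> \<bullet> d > 0"
    using t nn d by (auto simp: zero_less_mult_iff inner_commute)
  have dPhi: "d \<in> \<Phi>" using d DsubPhi by auto
  have "\<beta> \<noteq> d" using nD d by auto
  then have bd: "\<beta> - d \<in> \<Phi>" using root_diff[OF bPhi dPhi ipos] by simp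
  show ?thesis
  proof (cases "\<beta> - d \<in> P")
    case True then show ?thesis using d by auto
  next
    case False
    then have "d - \<beta> \<in> P" using sign[OF bd] by simp
    then have h: "\<forall>d'\<in>\<Delta>. crd d' (d - \<beta>) \<ge> 0" using P_iff by blast
    have "\<beta> = crd d \<beta> *\<^sub>R d"
    proof (rule eq_by_crd)
      fix d' assume d': "d' \<in> \<Delta>"
      show "crd d' \<beta> = crd d' (crd d \<beta> *\<^sub>R d)"
      proof (cases "d' = d")
        case True then show ?thesis using d by (simp add: crd_scale_basis)
      next
        case False
        then have "crd d' (d - \<beta>) = - crd d' \<beta>" using d by (simp add: crd_diff crd_basis)
        then have "crd d' \<beta> = 0" using h nn d' by force
        then show ?thesis using d False by (simp add: crd_scale_basis)
      qed
    qed
    then have "crd d \<beta> = 1 \<or> crd d \<beta> = -1" using reduced[OF dPhi] bPhi by metis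
    then have "\<beta> = d" using cpos \<open>\<beta> = crd d \<beta> *\<^sub>R d\<close> by auto
    with \<open>\<beta> \<noteq> d\<close> show ?thesis by simp
  qed
qed

lemma integral_aux: "\<beta> \<in> P \<Longrightarrow> ht \<beta> < real n \<Longrightarrow> d \<in> \<Delta> \<Longrightarrow> crd d \<beta> \<in> \<int>"
proof (induction n arbitrary: \<beta> d)
  case 0
  then show ?case using ht_pos[of \<beta>] by simp
next
  case (Suc n)
  show ?case
  proof (cases "\<beta> \<in> \<Delta>")
    case True then show ?thesis by (simp add: crd_basis)
  next
    case False
    then obtain d0 where d0: "d0 \<in> \<Delta>" "\<beta> - d0 \<in> P" using descent Suc.prems by blast
    have "ht (\<beta> - d0) < real n" using Suc.prems d0 by (simp add: ht_diff ht_basis)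
    then have "crd d (\<beta> - d0) \<in> \<int>" using Suc.IH d0 Suc.prems by blast
    moreover have "crd d \<beta> = crd d (\<beta> - d0) + crd d d0" by (simp add: crd_diff)
    moreover have "crd d d0 \<in> \<int>" using d0 by (simp add: crd_basis)
    ultimately show ?thesis by simp
  qed
qed

lemma integral: "\<beta> \<in> P \<Longrightarrow> d \<in> \<Delta> \<Longrightarrow> crd d \<beta> \<in> \<int>"
  using integral_aux reals_Archimedean2 by blast

lemma integral_Phi: "\<beta> \<in> \<Phi> \<Longrightarrow> d \<in> \<Delta> \<Longrightarrow> crd d \<beta> \<in> \<int>"
  using sign integral crd_neg by (metis Ints_minus minus_minus)

abbreviation R where "R \<equiv> {(x, y). x \<in> P \<and> y \<in> P \<and> y - x \<in> \<Delta>}"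

lemma poset_aux:
  "\<beta> \<in> P \<Longrightarrow> \<gamma> \<in> P \<Longrightarrow> (\<forall>d\<in>\<Delta>. crd d (\<beta> - \<gamma>) \<ge> 0) \<Longrightarrow> ht (\<beta> - \<gamma>) < real n
    \<Longrightarrow> (\<gamma>, \<beta>) \<in> R\<^sup>*"
proof (induction n arbitrary: \<beta> \<gamma>)
  case 0
  then show ?case using ht_nonneg[of "\<beta> - \<gamma>"] by simp
next
  case (Suc n)
  note bP = Suc.prems(1) and gP = Suc.prems(2) and xnn = Suc.prems(3) and hx = Suc.prems(4)
  show ?case
  proof (cases "\<beta> = \<gamma>")
    case True then show ?thesis by simp
  next
    case False
    define x where "x = \<beta> - \<gamma>"
    have bPhi: "\<beta> \<in> \<Phi>" and gPhi: "\<gamma> \<in> \<Phi>" using bP gP PsubPhi by auto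
    have bnn: "\<forall>d\<in>\<Delta>. crd d \<beta> \<ge> 0" and gnn: "\<forall>d\<in>\<Delta>. crd d \<gamma> \<ge> 0" using bP gP P_iff by blast+
    have "x \<noteq> 0" using False x_def by simp
    then obtain d where d: "d \<in> \<Delta>" and t: "crd d x * (d \<bullet> x) > 0"
      using exists_pos_term[of x] by auto
    have xnn': "\<forall>d\<in>\<Delta>. crd d x \<ge> 0" using xnn x_def by simp
    have cpos: "crd d x > 0" and ipos: "d \<bullet> x > 0"
      using t xnn' d by (auto simp: zero_less_mult_iff)
    have "crd d x \<in> \<int>" unfolding x_def crd_diff
      using integral[OF bP d] integral[OF gP d] by simp
    then have c1: "crd d x \<ge> 1" using cpos by (metis Ints_cases of_int_0_less_iff of_int_1_le_iff zero_less_imp_eq_int int_one_le_iff_zero_less)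
    have dPhi: "d \<in> \<Phi>" using d DsubPhi by auto
    have xd_nn: "\<forall>d'\<in>\<Delta>. crd d' (x - d) \<ge> 0"
      using xnn' c1 d by (auto simp: crd_diff crd_basis)
    have ht_xd: "ht (x - d) < real n" using hx d x_def by (simp add: ht_diff ht_basis)
    have "\<beta> \<bullet> d > \<gamma> \<bullet> d" using ipos x_def by (simp add: inner_diff_right inner_commute)
    then consider "\<beta> \<bullet> d > 0" | "\<gamma> \<bullet> d < 0" by linarith
    then show ?thesis
    proof cases
      case 1
      have "\<beta> \<noteq> d"
      proof
        assume bd: "\<beta> = d"
        have "\<gamma> = 0"
        proof (rule eq_by_crd)
          fix d' assume d': "d' \<in> \<Delta>"
          have e: "crd d' \<gamma> = crd d' \<beta> - crd d' x" using x_def by (simp add: crd_diff)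
          show "crd d' \<gamma> = crd d' 0"
          proof (cases "d' = d")
            case True
            have "crd d' \<gamma> \<ge> 0" using gnn d' by blast
            moreover have "crd d' \<beta> = 1" using bd True d by (simp add: crd_basis)
            ultimately have "crd d' \<gamma> = 0" using e c1 True by simp
            then show ?thesis by (simp add: crd_zero)
          next
            case False
            then show ?thesis using e bd d xnn' gnn d' by (force simp add: crd_basis crd_zero)
          qed
        qed
        with gPhi nz show False by auto
      qed
      then have bd: "\<beta> - d \<in> \<Phi>" using root_diff[OF bPhi dPhi 1] by simp
      have e2: "\<beta> - d = \<gamma> + (x - d)" using x_def by simp
      have "\<forall>d'\<in>\<Delta>. crd d' (\<beta> - d) \<ge> 0" unfolding e2 crd_add using xd_nn gnn by auto
      then have bdP: "\<beta> - d \<in> P" using bd P_iff by blast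
      have e3: "(\<beta> - d) - \<gamma> = x - d" using x_def by simp
      have "(\<gamma>, \<beta> - d) \<in> R\<^sup>*" using Suc.IH[OF bdP gP, unfolded e3] xd_nn ht_xd by blast
      moreover have "(\<beta> - d, \<beta>) \<in> R" using bdP bP d by simp
      ultimately show ?thesis by (rule rtrancl_into_rtrancl)
    next
      case 2
      have mdPhi: "- d \<in> \<Phi>" using neg_in[OF dPhi] .
      have "\<gamma> \<bullet> (- d) > 0" using 2 by simp
      moreover have "\<gamma> \<noteq> - d" using not_both[OF DsubP[OF d]] gP by auto
      ultimately have gd: "\<gamma> + d \<in> \<Phi>" using root_diff[OF gPhi mdPhi] by simp
      have "\<forall>d'\<in>\<Delta>. crd d' (\<gamma> + d) \<ge> 0" using gnn d by (simp add: crd_add crd_basis)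
      then have gdP: "\<gamma> + d \<in> P" using gd P_iff by blast
      have e3: "\<beta> - (\<gamma> + d) = x - d" using x_def by simp
      have "(\<gamma> + d, \<beta>) \<in> R\<^sup>*" using Suc.IH[OF bP gdP, unfolded e3] xd_nn ht_xd by blast
      moreover have "(\<gamma>, \<gamma> + d) \<in> R" using gdP gP d by simp
      ultimately show ?thesis by (metis (no_types, lifting) converse_rtrancl_into_rtrancl)
    qed
  qed
qed

lemma poset:
  assumes "\<beta> \<in> P" "\<gamma> \<in> P" "\<beta> - \<gamma> \<in> P"
  shows "root_le \<Phi> \<Delta> \<gamma> \<beta>"
proof -
  obtain n where "ht (\<beta> - \<gamma>) < real n" using reals_Archimedean2 by blast
  moreover have "\<forall>d\<in>\<Delta>. crd d (\<beta> - \<gamma>) \<ge> 0" using assms(3) P_iff by blast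
  ultimately have "(\<gamma>, \<beta>) \<in> R\<^sup>*" using poset_aux[OF assms(1,2)] by simp
  then show ?thesis unfolding root_le_def .
qed

lemma antichain_obtuse:
  assumes ac: "antichain \<Phi> \<Delta> \<Psi>" and b: "\<beta> \<in> \<Psi>" and g: "\<gamma> \<in> \<Psi>" and ne: "\<beta> \<noteq> \<gamma>"
  shows "\<beta> \<bullet> \<gamma> \<le> 0"
proof (rule ccontr)
  assume "\<not> ?thesis"
  then have pos: "\<beta> \<bullet> \<gamma> > 0" by simp
  have bP: "\<beta> \<in> P" and gP: "\<gamma> \<in> P" using ac b g unfolding antichain_def by auto
  have nle: "\<not> root_le \<Phi> \<Delta> \<beta> \<gamma>" "\<not> root_le \<Phi> \<Delta> \<gamma> \<beta>"
    using ac b g ne unfolding antichain_def by auto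
  have bg: "\<beta> - \<gamma> \<in> \<Phi>" using root_diff[OF _ _ pos ne] bP gP PsubPhi by auto
  have "\<beta> - \<gamma> \<in> P \<or> - (\<beta> - \<gamma>) \<in> P" by (rule sign[OF bg])
  then have "\<beta> - \<gamma> \<in> P \<or> \<gamma> - \<beta> \<in> P" by simp
  then show False
  proof
    assume "\<beta> - \<gamma> \<in> P"
    then have "root_le \<Phi> \<Delta> \<gamma> \<beta>" using poset bP gP by blast
    then show False using nle by simp
  next
    assume "\<gamma> - \<beta> \<in> P"
    then have "root_le \<Phi> \<Delta> \<beta> \<gamma>" using poset bP gP by blast
    then show False using nle by simp
  qed
qed


abbreviation W where "W \<equiv> weyl_group \<Phi>"

lemma W_linear: "w \<in> W \<Longrightarrow> linear w"
proof (induction rule: weyl_group.induct)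
  case weyl_id show ?case by (rule linear_id)
next
  case (weyl_step w a) show ?case by (rule linear_compose[OF weyl_step.IH linear_refl])
qed

lemma W_perm: "w \<in> W \<Longrightarrow> w ` \<Phi> = \<Phi>"
proof (induction rule: weyl_group.induct)
  case weyl_id show ?case by simp
next
  case (weyl_step w a) show ?case by (metis image_comp reflPhi weyl_step.IH weyl_step.hyps(2))
qed

lemma W_in: "w \<in> W \<Longrightarrow> \<beta> \<in> \<Phi> \<Longrightarrow> w \<beta> \<in> \<Phi>"
  using W_perm by blast

lemma W_right: "w \<in> W \<Longrightarrow> \<alpha> \<in> \<Phi> \<Longrightarrow> w \<circ> refl \<alpha> \<in> W"
proof (induction rule: weyl_group.induct)
  case weyl_id
  have "refl \<alpha> \<circ> id \<in> W" by (rule weyl_group.weyl_step[OF weyl_group.weyl_id weyl_id.prems])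
  then show ?case by simp
next
  case (weyl_step w a)
  have "refl a \<circ> (w \<circ> refl \<alpha>) \<in> W" by (rule weyl_group.weyl_step[OF weyl_step.IH[OF weyl_step.prems] weyl_step.hyps(2)])
  then show ?case by (simp only: comp_assoc)
qed

lemma W_fin: "finite W"
proof -
  let ?L = "{w. linear w \<and> w ` \<Phi> \<subseteq> \<Phi>}"
  have sub: "W \<subseteq> ?L" using W_linear W_perm by auto
  have inj: "inj_on (\<lambda>w. restrict w \<Phi>) ?L"
  proof (rule inj_onI)
    fix u v assume u: "u \<in> ?L" and v: "v \<in> ?L" and e: "restrict u \<Phi> = restrict v \<Phi>"
    have eqb: "\<And>b. b \<in> \<Phi> \<Longrightarrow> u b = v b" using fun_cong[OF e] by (metis restrict_apply')
    have "u x = v x" for x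
      using linear_eq_on[where f=u and g=v and B=\<Phi> and x=x] u v spanPhi eqb by auto
    then show "u = v" by (rule ext)
  qed
  have "(\<lambda>w. restrict w \<Phi>) ` ?L \<subseteq> Pi\<^sub>E \<Phi> (\<lambda>_. \<Phi>)" by auto
  moreover have "finite (Pi\<^sub>E \<Phi> (\<lambda>_. \<Phi>))" using finPhi by (simp add: finite_PiE)
  ultimately have "finite ((\<lambda>w. restrict w \<Phi>) ` ?L)" by (rule finite_subset)
  then have "finite ?L" using finite_imageD inj by blast
  then show ?thesis using sub finite_subset by blast
qed

lemma W_ne: "W \<noteq> {}" using weyl_id by blast

lemma W_bij: "\<alpha> \<in> \<Phi> \<Longrightarrow> bij_betw (\<lambda>w. w \<circ> refl \<alpha>) W W"
proof (rule bij_betw_byWitness[where f'="\<lambda>w. w \<circ> refl \<alpha>"])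
  assume a: "\<alpha> \<in> \<Phi>"
  have rr: "refl \<alpha> \<circ> refl \<alpha> = id" using refl_refl[OF nz[OF a]] by (auto simp: fun_eq_iff)
  show "\<forall>w\<in>W. w \<circ> refl \<alpha> \<circ> refl \<alpha> = w" using rr by (simp add: o_assoc[symmetric])
  show "\<forall>w\<in>W. w \<circ> refl \<alpha> \<circ> refl \<alpha> = w" using rr by (simp add: o_assoc[symmetric])
  show "(\<lambda>w. w \<circ> refl \<alpha>) ` W \<subseteq> W" "(\<lambda>w. w \<circ> refl \<alpha>) ` W \<subseteq> W" using W_right a by auto
qed

lemma uminus_image_iff: "x \<in> uminus ` A \<longleftrightarrow> - x \<in> (A :: 'a set)"
  by (metis image_eqI minus_minus imageE)

lemma X_flip:
  assumes b: "\<beta> \<in> \<Phi>" and w: "w \<in> W"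
  shows "Xvar \<Phi> \<Delta> \<beta> (w \<circ> refl \<beta>) = 1 - Xvar \<Phi> \<Delta> \<beta> w"
proof -
  have "(w \<circ> refl \<beta>) \<beta> = - w \<beta>"
    using refl_self[OF nz[OF b]] W_linear[OF w] by (simp add: linear_neg)
  moreover have "w \<beta> \<in> \<Phi>" using W_in w b by blast
  moreover note sign[of "w \<beta>"] not_both[of "w \<beta>"]
  ultimately show ?thesis unfolding Xvar_def uminus_image_iff by auto
qed

lemma X_fix:
  assumes "\<gamma> \<bullet> \<beta> = 0"
  shows "Xvar \<Phi> \<Delta> \<gamma> (w \<circ> refl \<beta>) = Xvar \<Phi> \<Delta> \<gamma> w"
  using refl_orth[OF assms] by (simp add: Xvar_def)

lemma orth_indep:
  assumes b: "\<beta> \<in> \<Phi>" and g: "\<gamma> \<in> \<Phi>" and o: "\<beta> \<bullet> \<gamma> = 0"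
  shows "\<not> dependent_pair \<Phi> \<Delta> \<beta> \<gamma>"
proof -
  have "prob_space.indep_var (measure_pmf (pmf_of_set W)) borel (Xvar \<Phi> \<Delta> \<beta>) borel (Xvar \<Phi> \<Delta> \<gamma>)"
  proof (rule indep_var_pmf_of_set[OF W_fin W_ne W_bij[OF b] W_bij[OF g]])
  fix w assume w: "w \<in> W"
  show "Xvar \<Phi> \<Delta> \<beta> w = 0 \<or> Xvar \<Phi> \<Delta> \<beta> w = 1" "Xvar \<Phi> \<Delta> \<gamma> w = 0 \<or> Xvar \<Phi> \<Delta> \<gamma> w = 1"
    by (auto simp: Xvar_def)
  show "Xvar \<Phi> \<Delta> \<beta> (w \<circ> refl \<beta>) = 1 - Xvar \<Phi> \<Delta> \<beta> w" by (rule X_flip[OF b w])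
  show "Xvar \<Phi> \<Delta> \<gamma> (w \<circ> refl \<gamma>) = 1 - Xvar \<Phi> \<Delta> \<gamma> w" by (rule X_flip[OF g w])
  show "Xvar \<Phi> \<Delta> \<gamma> (w \<circ> refl \<beta>) = Xvar \<Phi> \<Delta> \<gamma> w" by (rule X_fix) (simp add: o inner_commute)
  qed
  then show ?thesis unfolding dependent_pair_def by simp
qed


lemma pos_sum_nz:
  assumes fin: "finite S" and sub: "S \<subseteq> P" and ne: "S \<noteq> {}" and c: "\<And>v. v \<in> S \<Longrightarrow> c v > 0"
  shows "(\<Sum>v\<in>S. c v *\<^sub>R v) \<noteq> 0"
proof
  assume z: "(\<Sum>v\<in>S. c v *\<^sub>R v) = 0"
  have "ht (\<Sum>v\<in>S. c v *\<^sub>R v) = (\<Sum>v\<in>S. c v * ht v)"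
    using linear_ht by (simp add: linear_sum linear_scale)
  also have "\<dots> > 0"
  proof (rule sum_pos[OF fin ne])
    fix v assume "v \<in> S"
    then show "c v * ht v > 0" using c ht_pos sub by auto
  qed
  finally show False using z ht_zero by simp
qed

definition hat :: "'a \<Rightarrow> 'a" where "hat v = (1 / norm v) *\<^sub>R v"

lemma hat_inner: "hat a \<bullet> hat b = (a \<bullet> b) / (norm a * norm b)"
  by (simp add: hat_def)

lemma hat_self: "a \<noteq> 0 \<Longrightarrow> hat a \<bullet> hat a = 1"
proof -
  assume "a \<noteq> 0"
  have "a \<bullet> a = norm a * norm a" by (metis power2_eq_square power2_norm_eq_inner)
  then show ?thesis unfolding hat_inner using \<open>a \<noteq> 0\<close> by simp
qed

lemma hat_nonpos: "a \<bullet> b \<le> 0 \<Longrightarrow> hat a \<bullet> hat b \<le> 0"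
  by (simp add: hat_inner divide_nonpos_nonneg)

lemma hat_half:
  assumes a: "a \<in> \<Phi>" and b: "b \<in> \<Phi>" and neg: "a \<bullet> b < 0"
  shows "hat a \<bullet> hat b \<le> - 1/2"
proof -
  have na: "norm a > 0" and nb: "norm b > 0" using nz a b by auto
  have "(norm a * norm b)^2 \<le> (2 * (a \<bullet> b))^2"
    using obtuse_bound[OF a b neg] by (simp add: power_mult_distrib power2_norm_eq_inner)
  then have "norm a * norm b \<le> \<bar>2 * (a \<bullet> b)\<bar>"
    using abs_le_square_iff by (metis abs_of_nonneg mult_nonneg_nonneg norm_ge_zero)
  then have "norm a * norm b \<le> - 2 * (a \<bullet> b)" using neg by simp
  then show ?thesis using na nb unfolding hat_inner by (simp add: divide_le_eq field_simps)
qed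

lemma hat_sum_nz:
  assumes fin: "finite S" and sub: "S \<subseteq> P" and ne: "S \<noteq> {}"
  shows "(\<Sum>v\<in>S. hat v) \<noteq> 0"
  unfolding hat_def
proof (rule pos_sum_nz[OF fin sub ne])
  fix v assume "v \<in> S"
  then have "v \<noteq> 0" using sub PsubPhi nz by blast
  then show "1 / norm v > 0" by simp
qed

lemma finite_Psi: "antichain \<Phi> \<Delta> \<Psi> \<Longrightarrow> finite \<Psi>"
proof -
  assume "antichain \<Phi> \<Delta> \<Psi>"
  then have "\<Psi> \<subseteq> \<Phi>" unfolding antichain_def using PsubPhi by auto
  then show ?thesis using finPhi by (rule finite_subset)
qed

lemma row_bound:
  assumes ac: "antichain \<Phi> \<Delta> \<Psi>" and a: "a \<in> \<Psi>"
  shows "(\<Sum>b\<in>\<Psi>. hat a \<bullet> hat b) \<le> 1 - real (card {b\<in>\<Psi>. b \<noteq> a \<and> a \<bullet> b \<noteq> 0}) / 2"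
proof -
  have fin: "finite \<Psi>" using finite_Psi[OF ac] .
  have PsiP: "\<Psi> \<subseteq> \<Phi>" using ac PsubPhi unfolding antichain_def by auto
  let ?N = "{b\<in>\<Psi>. b \<noteq> a \<and> a \<bullet> b \<noteq> 0}"
  have "(\<Sum>b\<in>\<Psi>. hat a \<bullet> hat b) = hat a \<bullet> hat a + (\<Sum>b\<in>\<Psi> - {a}. hat a \<bullet> hat b)"
    using fin a by (simp add: sum.remove)
  also have "hat a \<bullet> hat a = 1" using hat_self nz a PsiP by auto
  also have "(\<Sum>b\<in>\<Psi> - {a}. hat a \<bullet> hat b) \<le> (\<Sum>b\<in>\<Psi> - {a}. if b \<in> ?N then - 1/2 else 0)"
  proof (rule sum_mono)
    fix b assume b: "b \<in> \<Psi> - {a}"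
    have le: "a \<bullet> b \<le> 0" using antichain_obtuse[OF ac a] b by auto
    show "hat a \<bullet> hat b \<le> (if b \<in> ?N then - 1/2 else 0)"
    proof (cases "b \<in> ?N")
      case True
      then have "a \<bullet> b < 0" using le by auto
      then show ?thesis using True hat_half a b PsiP by auto
    next
      case False show ?thesis unfolding if_not_P[OF False] by (rule hat_nonpos[OF le])
    qed
  qed
  also have "(\<Sum>b\<in>\<Psi> - {a}. if b \<in> ?N then - 1/2 else (0::real)) = (\<Sum>b\<in>?N. - 1/2)"
  proof -
    have se: "{x \<in> \<Psi> - {a}. x \<in> ?N} = ?N" by auto
    have "(\<Sum>b\<in>\<Psi> - {a}. if b \<in> ?N then - 1/2 else (0::real)) = (\<Sum>b\<in>{x \<in> \<Psi> - {a}. x \<in> ?N}. - 1/2)"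
      by (rule sum.inter_filter[symmetric]) (use fin in simp)
    then show ?thesis unfolding se .
  qed
  also have "\<dots> = - real (card ?N) / 2" by simp
  finally show ?thesis by simp
qed

lemma norm_sum_sq: "(\<Sum>a\<in>S. f a) \<bullet> (\<Sum>b\<in>S. f b) = (\<Sum>a\<in>S. \<Sum>b\<in>S. f a \<bullet> f b)"
  unfolding inner_sum_left inner_sum_right by (rule sum.swap)

lemma sigma_card:
  fixes \<Psi> :: "'a set"
  assumes fin: "finite \<Psi>"
  shows "card (SIGMA a:\<Psi>. {b\<in>\<Psi>. b \<noteq> a \<and> a \<bullet> b \<noteq> 0})
       = 2 * card {{a, b} | a b. a \<in> \<Psi> \<and> b \<in> \<Psi> \<and> a \<noteq> b \<and> a \<bullet> b \<noteq> 0}"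
proof -
  let ?D = "SIGMA a:\<Psi>. {b\<in>\<Psi>. b \<noteq> a \<and> a \<bullet> b \<noteq> 0}"
  let ?E = "{{a, b} | a b. a \<in> \<Psi> \<and> b \<in> \<Psi> \<and> a \<noteq> b \<and> a \<bullet> b \<noteq> 0}"
  define F where "F e = {(a, b). a \<noteq> b \<and> {a, b} = e}" for e :: "'a set"
  have finE: "finite ?E"
  proof (rule finite_subset[of _ "Pow \<Psi>"])
    show "?E \<subseteq> Pow \<Psi>" by auto
  qed (use fin in simp)
  have D_eq: "?D = (\<Union>e\<in>?E. F e)"
  proof
    show "?D \<subseteq> (\<Union>e\<in>?E. F e)"
    proof
      fix p assume "p \<in> ?D"
      then obtain a b where p: "p = (a, b)" "a \<in> \<Psi>" "b \<in> \<Psi>" "a \<noteq> b" "a \<bullet> b \<noteq> 0" by auto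
      then have "{a, b} \<in> ?E" by blast
      moreover have "p \<in> F {a, b}" using p by (auto simp: F_def)
      ultimately show "p \<in> (\<Union>e\<in>?E. F e)" by blast
    qed
  next
    show "(\<Union>e\<in>?E. F e) \<subseteq> ?D"
    proof
      fix p assume "p \<in> (\<Union>e\<in>?E. F e)"
      then obtain e where e: "e \<in> ?E" and pe: "p \<in> F e" by blast
      then obtain a b where p: "p = (a, b)" "a \<noteq> b" "{a, b} = e" unfolding F_def by blast
      from e obtain a' b' where e': "e = {a', b'}" "a' \<in> \<Psi>" "b' \<in> \<Psi>" "a' \<noteq> b'" "a' \<bullet> b' \<noteq> 0" by blast
      have "(a = a' \<and> b = b') \<or> (a = b' \<and> b = a')" using p(3) e'(1) by (simp add: doubleton_eq_iff)
      then show "p \<in> ?D" using e' p by (auto simp: inner_commute)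
    qed
  qed
  have cardF: "card (F e) = 2" if "e \<in> ?E" for e
  proof -
    from that obtain a' b' where e': "e = {a', b'}" "a' \<noteq> b'" by blast
    have "F e = {(a', b'), (b', a')}" unfolding F_def e'(1) using e'(2) by (auto simp: doubleton_eq_iff)
    then show ?thesis using e'(2) by simp
  qed
  have finF: "finite (F e)" if "e \<in> ?E" for e using cardF[OF that] by (metis card.infinite zero_neq_numeral)
  have disj: "F e \<inter> F e' = {}" if "e \<in> ?E" "e' \<in> ?E" "e \<noteq> e'" for e e'
    using that by (auto simp: F_def)
  have "card ?D = (\<Sum>e\<in>?E. card (F e))"
    unfolding D_eq by (rule card_UN_disjoint[OF finE]) (use finF disj in auto)
  also have "\<dots> = (\<Sum>e\<in>?E. 2)" using cardF by (intro sum.cong) auto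
  finally show ?thesis by simp
qed

lemma part2:
  assumes ac: "antichain \<Phi> \<Delta> \<Psi>"
  shows "card {{\<beta>, \<gamma>} | \<beta> \<gamma>. \<beta> \<in> \<Psi> \<and> \<gamma> \<in> \<Psi> \<and> \<beta> \<noteq> \<gamma> \<and> dependent_pair \<Phi> \<Delta> \<beta> \<gamma>} \<le> card \<Psi> - 1"
proof -
  have fin: "finite \<Psi>" using finite_Psi[OF ac] .
  have PsiP: "\<Psi> \<subseteq> P" using ac unfolding antichain_def by auto
  then have PsiPhi: "\<Psi> \<subseteq> \<Phi>" using PsubPhi by auto
  let ?E = "{{a, b} | a b. a \<in> \<Psi> \<and> b \<in> \<Psi> \<and> a \<noteq> b \<and> a \<bullet> b \<noteq> 0}"
  let ?Ed = "{{\<beta>, \<gamma>} | \<beta> \<gamma>. \<beta> \<in> \<Psi> \<and> \<gamma> \<in> \<Psi> \<and> \<beta> \<noteq> \<gamma> \<and> dependent_pair \<Phi> \<Delta> \<beta> \<gamma>}"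
  let ?N = "\<lambda>a. {b\<in>\<Psi>. b \<noteq> a \<and> a \<bullet> b \<noteq> 0}"
  have finE: "finite ?E"
    by (rule finite_subset[of _ "Pow \<Psi>"]) (use fin in auto)
  have sub: "?Ed \<subseteq> ?E"
  proof
    fix e assume "e \<in> ?Ed"
    then obtain a b where e: "e = {a, b}" "a \<in> \<Psi>" "b \<in> \<Psi>" "a \<noteq> b" "dependent_pair \<Phi> \<Delta> a b" by blast
    then have "a \<bullet> b \<noteq> 0" using orth_indep PsiPhi by blast
    then show "e \<in> ?E" using e by blast
  qed
  have "card ?E \<le> card \<Psi> - 1"
  proof (cases "\<Psi> = {}")
    case True
    then have "?E = {}" by auto
    then have "card ?E = 0" by (simp only: card.empty)
    then show ?thesis by (simp only: le0)
  next
    case False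
    have "0 < (\<Sum>a\<in>\<Psi>. hat a) \<bullet> (\<Sum>a\<in>\<Psi>. hat a)"
      using hat_sum_nz[OF fin PsiP False] by simp
    also have "\<dots> = (\<Sum>a\<in>\<Psi>. \<Sum>b\<in>\<Psi>. hat a \<bullet> hat b)" by (rule norm_sum_sq)
    also have "\<dots> \<le> (\<Sum>a\<in>\<Psi>. 1 - real (card (?N a)) / 2)"
      by (rule sum_mono) (rule row_bound[OF ac])
    also have "\<dots> = real (card \<Psi>) - real (\<Sum>a\<in>\<Psi>. card (?N a)) / 2"
      by (simp add: sum_subtractf sum_divide_distrib)
    also have "(\<Sum>a\<in>\<Psi>. card (?N a)) = card (SIGMA a:\<Psi>. ?N a)"
      using fin by (simp add: card_SigmaI)
    also have "\<dots> = 2 * card ?E" by (rule sigma_card[OF fin])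
    finally have "card ?E < card \<Psi>" by simp
    then show ?thesis by simp
  qed
  moreover have "card ?Ed \<le> card ?E" by (rule card_mono[OF finE sub])
  ultimately show ?thesis by simp
qed


lemma part3:
  assumes ac: "antichain \<Phi> \<Delta> \<Psi>" and b: "\<beta> \<in> \<Psi>"
  shows "card {\<gamma>\<in>\<Psi>. \<gamma> \<noteq> \<beta> \<and> dependent_pair \<Phi> \<Delta> \<beta> \<gamma>} \<le> 3"
proof -
  have fin: "finite \<Psi>" using finite_Psi[OF ac] .
  have PsiP: "\<Psi> \<subseteq> P" using ac unfolding antichain_def by auto
  then have PsiPhi: "\<Psi> \<subseteq> \<Phi>" using PsubPhi by auto
  define N where "N = {\<gamma>\<in>\<Psi>. \<gamma> \<noteq> \<beta> \<and> \<beta> \<bullet> \<gamma> \<noteq> 0}"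
  have finN: "finite N" using fin unfolding N_def by simp
  have NPsi: "N \<subseteq> \<Psi>" and bN: "\<beta> \<notin> N" unfolding N_def by auto
  have sub: "{\<gamma>\<in>\<Psi>. \<gamma> \<noteq> \<beta> \<and> dependent_pair \<Phi> \<Delta> \<beta> \<gamma>} \<subseteq> N"
    unfolding N_def using orth_indep b PsiPhi by blast
  define y where "y = (\<Sum>u\<in>N. hat u)"
  define c where "c v = (if v = \<beta> then 2 / norm v else 1 / norm v)" for v
  have bPhi: "\<beta> \<in> \<Phi>" using b PsiPhi by auto
  have "(\<Sum>v\<in>insert \<beta> N. c v *\<^sub>R v) = c \<beta> *\<^sub>R \<beta> + (\<Sum>v\<in>N. c v *\<^sub>R v)"
    using finN bN by simp
  also have "(\<Sum>v\<in>N. c v *\<^sub>R v) = y"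
    unfolding y_def hat_def c_def using bN by (intro sum.cong) auto
  also have "c \<beta> *\<^sub>R \<beta> = 2 *\<^sub>R hat \<beta>" by (simp add: c_def hat_def)
  finally have xeq: "(\<Sum>v\<in>insert \<beta> N. c v *\<^sub>R v) = 2 *\<^sub>R hat \<beta> + y" .
  have "(\<Sum>v\<in>insert \<beta> N. c v *\<^sub>R v) \<noteq> 0"
  proof (rule pos_sum_nz)
    show "finite (insert \<beta> N)" using finN by simp
    show "insert \<beta> N \<subseteq> P" using NPsi b PsiP by auto
    show "insert \<beta> N \<noteq> {}" by simp
    fix v assume "v \<in> insert \<beta> N"
    then have "v \<noteq> 0" using NPsi b PsiPhi nz by blast
    then show "c v > 0" by (cases "v = \<beta>") (simp_all add: c_def)
  qed
  then have xnz: "2 *\<^sub>R hat \<beta> + y \<noteq> 0" using xeq by simp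
  have "0 < (2 *\<^sub>R hat \<beta> + y) \<bullet> (2 *\<^sub>R hat \<beta> + y)" using xnz by simp
  also have "\<dots> = 4 * (hat \<beta> \<bullet> hat \<beta>) + 4 * (hat \<beta> \<bullet> y) + y \<bullet> y"
    by (simp add: inner_add_left inner_add_right inner_commute)
  also have "hat \<beta> \<bullet> hat \<beta> = 1" using hat_self nz bPhi by auto
  also have "hat \<beta> \<bullet> y \<le> - real (card N) / 2"
  proof -
    have "hat \<beta> \<bullet> y = (\<Sum>u\<in>N. hat \<beta> \<bullet> hat u)" unfolding y_def by (simp add: inner_sum_right)
    also have "\<dots> \<le> (\<Sum>u\<in>N. - 1/2)"
    proof (rule sum_mono)
      fix u assume u: "u \<in> N"
      then have "\<beta> \<bullet> u \<noteq> 0" "u \<in> \<Psi>" "u \<noteq> \<beta>" unfolding N_def by auto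
      moreover have "\<beta> \<bullet> u \<le> 0" using antichain_obtuse[OF ac b] calculation by auto
      ultimately have "\<beta> \<bullet> u < 0" by simp
      then show "hat \<beta> \<bullet> hat u \<le> - 1/2" using hat_half bPhi \<open>u \<in> \<Psi>\<close> PsiPhi by auto
    qed
    also have "\<dots> = - real (card N) / 2" by simp
    finally show ?thesis .
  qed
  also have "y \<bullet> y \<le> real (card N)"
  proof -
    have "y \<bullet> y = (\<Sum>u\<in>N. \<Sum>u'\<in>N. hat u \<bullet> hat u')" unfolding y_def by (rule norm_sum_sq)
    also have "\<dots> \<le> (\<Sum>u\<in>N. 1)"
    proof (rule sum_mono)
      fix u assume u: "u \<in> N"
      then have uPsi: "u \<in> \<Psi>" using NPsi by auto
      have "(\<Sum>u'\<in>N. hat u \<bullet> hat u') = hat u \<bullet> hat u + (\<Sum>u'\<in>N - {u}. hat u \<bullet> hat u')"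
        using finN u by (simp add: sum.remove)
      also have "hat u \<bullet> hat u = 1" using hat_self nz uPsi PsiPhi by auto
      also have "(\<Sum>u'\<in>N - {u}. hat u \<bullet> hat u') \<le> 0"
      proof (rule sum_nonpos)
        fix u' assume "u' \<in> N - {u}"
        then have "u' \<in> \<Psi>" "u' \<noteq> u" using NPsi by auto
        then show "hat u \<bullet> hat u' \<le> 0" using hat_nonpos antichain_obtuse[OF ac uPsi] by auto
      qed
      finally show "(\<Sum>u'\<in>N. hat u \<bullet> hat u') \<le> 1" by simp
    qed
    also have "\<dots> = real (card N)" by simp
    finally show ?thesis .
  qed
  finally have "card N < 4" by simp
  then have "card N \<le> 3" by simp
  moreover have "card {\<gamma>\<in>\<Psi>. \<gamma> \<noteq> \<beta> \<and> dependent_pair \<Phi> \<Delta> \<beta> \<gamma>} \<le> card N"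
    by (rule card_mono[OF finN sub])
  ultimately show ?thesis by simp
qed

end

theorem lemma4p3:
  fixes \<Phi> \<Delta> \<Psi> :: "'a::euclidean_space set"
  assumes "root_system \<Phi>" and "simple_system \<Phi> \<Delta>" and "antichain \<Phi> \<Delta> \<Psi>"
  shows "(\<forall>\<beta>\<in>\<Psi>. \<forall>\<gamma>\<in>\<Psi>. \<beta> \<noteq> \<gamma> \<longrightarrow> \<beta> \<bullet> \<gamma> \<le> 0)
    \<and> card {{\<beta>, \<gamma>} | \<beta> \<gamma>. \<beta> \<in> \<Psi> \<and> \<gamma> \<in> \<Psi> \<and> \<beta> \<noteq> \<gamma> \<and> dependent_pair \<Phi> \<Delta> \<beta> \<gamma>}
        \<le> card \<Psi> - 1
    \<and> (\<forall>\<beta>\<in>\<Psi>. card {\<gamma>\<in>\<Psi>. \<gamma> \<noteq> \<beta> \<and> dependent_pair \<Phi> \<Delta> \<beta> \<gamma>} \<le> 3)"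
proof -
  interpret rsys \<Phi> \<Delta> using assms(1,2) by (rule rsys.intro)
  show ?thesis using antichain_obtuse[OF assms(3)] part2[OF assms(3)] part3[OF assms(3)] by blast
qed

end
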